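(* Consider the double integrator $\dot x_1=x_2$, $\dot x_2=u$ with $u\in U=[-1,1]$ and $Q=[-1,1]^2$, using the $\infty$-norm. Then $Q$ is not controlled invariant, and not controlled $\tau$-recurrent for any $\tau<2$, so $h_{\mathrm{inv}}(Q)=+\infty$ and $h_{\mathrm{rec}}(\tau,Q)=+\infty$ for $\tau<2$; moreover $Q$ is controlled $2$-recurrent and $h_{\mathrm{rec}}(\tau,Q)\le 2/\ln 2$ for all $\tau\ge2$.
   Context: Controls are piecewise continuous functions $\mathbb R_{\ge0}\to U$; $\xi(x,u,t)$ the solution; $N_\varepsilon(Q)=\{y:\exists x\in Q,\|x-y\|_\infty\le\varepsilon\}$; $\log$ base 2. Controlled invariant: for each $x\in Q$ some $u$ keeps $\xi(x,u,t)\in Q$ for all $t\ge0$. Controlled $\tau$-recurrent: for each $x\in Q$ some $u$ satisfies: for all $t\ge0$ there is $t'\in[t,t+\tau]$ with $\xi(x,u,t')\in Q$. A trajectory is $(T,\varepsilon,\tau,Q)$-recurrent if for every $t\in[0,T-\tau]$ there is $t'\in[t,t+\tau]$ with $\xi(x,u,t')\in N_\varepsilon(Q)$; $r_{\mathrm{rec}}(T,\varepsilon,\tau,Q)$ is the minimal cardinality of a set $S$ of controls such that every $x\in Q$ has some $u\in S$ making $\xi(x,u,\cdot)$ $(T,\varepsilon,\tau,Q)$-recurrent ($\infty$ if none), and $h_{\mathrm{rec}}(\tau,Q)=\lim_{\varepsilon\searrow0}\limsup_{T\to\infty}\frac1T\log r_{\mathrm{rec}}(T,\varepsilon,\tau,Q)$.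 Invariance entropy $h_{\mathrm{inv}}(Q)$ is defined analogously with the requirement $\xi(x,u,t)\in N_\varepsilon(Q)$ for all $t\in[0,T]$. *)

theory Defs
  imports "HOL-Analysis.Analysis" "HOL-Library.Extended_Nat" "HOL-Library.Extended_Real"
begin

definition piecewise_continuous :: "(real \<Rightarrow> real) \<Rightarrow> bool" where
  "piecewise_continuous u \<longleftrightarrow>
     (\<forall>T\<ge>0. \<exists>S. finite S \<and> continuous_on ({0..T} - S) u \<and>
        (\<forall>s\<in>S. (\<exists>l. (u \<longlongrightarrow> l) (at s within {0..<s})) \<and>
                (\<exists>r. (u \<longlongrightarrow> r) (at s within {s<..}))))"

definition admissible_controls :: "(real \<Rightarrow> real) set" where
  "admissible_controls = {u. piecewise_continuous u \<and> (\<forall>t\<ge>0. u t \<in> {-1..1})}"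

text \<open>The solution xi(x,u,t), written as the integral form of the ODE.\<close>
definition xi2 :: "real \<times> real \<Rightarrow> (real \<Rightarrow> real) \<Rightarrow> real \<Rightarrow> real" where
  "xi2 x u t = snd x + integral {0..t} u"

definition xi1 :: "real \<times> real \<Rightarrow> (real \<Rightarrow> real) \<Rightarrow> real \<Rightarrow> real" where
  "xi1 x u t = fst x + integral {0..t} (\<lambda>s. xi2 x u s)"

definition xi :: "real \<times> real \<Rightarrow> (real \<Rightarrow> real) \<Rightarrow> real \<Rightarrow> real \<times> real" where
  "xi x u t = (xi1 x u t, xi2 x u t)"

definition Q_box :: "(real \<times> real) set" where
  "Q_box = {-1..1} \<times> {-1..1}"

definition nbhd :: "real \<Rightarrow> (real \<times> real) set \<Rightarrow> (real \<times> real) set" where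
  "nbhd \<epsilon> Q = {y. \<exists>x\<in>Q. max \<bar>fst x - fst y\<bar> \<bar>snd x - snd y\<bar> \<le> \<epsilon>}"

definition controlled_invariant :: "(real \<times> real) set \<Rightarrow> bool" where
  "controlled_invariant Q \<longleftrightarrow>
     (\<forall>x\<in>Q. \<exists>u\<in>admissible_controls. \<forall>t\<ge>0. xi x u t \<in> Q)"

definition controlled_recurrent :: "real \<Rightarrow> (real \<times> real) set \<Rightarrow> bool" where
  "controlled_recurrent \<tau> Q \<longleftrightarrow>
     (\<forall>x\<in>Q. \<exists>u\<in>admissible_controls. \<forall>t\<ge>0. \<exists>t'\<in>{t..t+\<tau>}. xi x u t' \<in> Q)"

definition rec_traj :: "real \<Rightarrow> real \<Rightarrow> real \<Rightarrow> (real \<times> real) set \<Rightarrow> real \<times> real \<Rightarrow> (real \<Rightarrow> real) \<Rightarrow> bool" where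
  "rec_traj T \<epsilon> \<tau> Q x u \<longleftrightarrow>
     (\<forall>t\<in>{0..T-\<tau>}. \<exists>t'\<in>{t..t+\<tau>}. xi x u t' \<in> nbhd \<epsilon> Q)"

definition inv_traj :: "real \<Rightarrow> real \<Rightarrow> (real \<times> real) set \<Rightarrow> real \<times> real \<Rightarrow> (real \<Rightarrow> real) \<Rightarrow> bool" where
  "inv_traj T \<epsilon> Q x u \<longleftrightarrow> (\<forall>t\<in>{0..T}. xi x u t \<in> nbhd \<epsilon> Q)"

definition ecard :: "'a set \<Rightarrow> enat" where
  "ecard S = (if finite S then enat (card S) else \<infinity>)"

text \<open>Minimal cardinality of a spanning set of controls; Inf of the empty set is \<infinity>.\<close>
definition r_rec :: "real \<Rightarrow> real \<Rightarrow> real \<Rightarrow> (real \<times> real) set \<Rightarrow> enat" where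
  "r_rec T \<epsilon> \<tau> Q = (INF S \<in> {S. S \<subseteq> admissible_controls \<and>
                          (\<forall>x\<in>Q. \<exists>u\<in>S. rec_traj T \<epsilon> \<tau> Q x u)}. ecard S)"

definition r_inv :: "real \<Rightarrow> real \<Rightarrow> (real \<times> real) set \<Rightarrow> enat" where
  "r_inv T \<epsilon> Q = (INF S \<in> {S. S \<subseteq> admissible_controls \<and>
                          (\<forall>x\<in>Q. \<exists>u\<in>S. inv_traj T \<epsilon> Q x u)}. ecard S)"

definition elog2 :: "enat \<Rightarrow> ereal" where
  "elog2 n = (case n of enat k \<Rightarrow> ereal (log 2 (real k)) | \<infinity> \<Rightarrow> \<infinity>)"

definition h_rec :: "real \<Rightarrow> (real \<times> real) set \<Rightarrow> ereal" where
  "h_rec \<tau> Q = Lim (at_right 0)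
     (\<lambda>\<epsilon>. Limsup at_top (\<lambda>T. ereal (1 / T) * elog2 (r_rec T \<epsilon> \<tau> Q)))"

definition h_inv :: "(real \<times> real) set \<Rightarrow> ereal" where
  "h_inv Q = Lim (at_right 0)
     (\<lambda>\<epsilon>. Limsup at_top (\<lambda>T. ereal (1 / T) * elog2 (r_inv T \<epsilon> Q)))"

end

theory Submission
  imports Defs
begin


lemma adm_integrable:
  assumes "u \<in> admissible_controls" "T \<ge> 0"
  shows "u integrable_on {0..T}"
proof -
  from assms obtain S where S: "finite S" "continuous_on ({0..T} - S) u"
    unfolding admissible_controls_def piecewise_continuous_def by blast
  have b: "\<forall>t\<ge>0. u t \<in> {-1..1}" using assms unfolding admissible_controls_def by auto
  let ?S' = "{0..T} - S"
  have meas: "?S' \<in> sets lebesgue"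
    using S(1) by (intro sets.Diff) (auto intro: negligible_imp_sets)
  have m: "u \<in> borel_measurable (lebesgue_on ?S')"
    by (rule continuous_imp_measurable_on_sets_lebesgue[OF S(2) meas])
  have c: "(\<lambda>_. 1::real) integrable_on ?S'"
    by (rule integrable_spike_set[where S="{0..T}"]) (auto intro: negligible_subset[OF negligible_finite[OF S(1)]])
  have "u integrable_on ?S'"
    by (rule measurable_bounded_by_integrable_imp_integrable_real[OF m c _ meas]) (use b in auto)
  then show ?thesis
    by (rule integrable_spike_set) (auto intro: negligible_subset[OF negligible_finite[OF S(1)]])
qed

lemma xi2_cont:
  assumes "u \<in> admissible_controls" "T \<ge> 0"
  shows "continuous_on {0..T} (xi2 x u)"
  unfolding xi2_def
  by (intro continuous_intros indefinite_integral_continuous_1 adm_integrable assms)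

lemma xi2_int:
  assumes "u \<in> admissible_controls" "T \<ge> 0"
  shows "xi2 x u integrable_on {0..T}"
  by (rule integrable_continuous_interval[OF xi2_cont[OF assms]])

lemma poly_has_int:
  assumes "t0 \<le> (t::real)"
  shows "((\<lambda>r. A + c*(r - t0)) has_integral (A*(t-t0) + c*(t-t0)^2/2)) {t0..t}"
proof -
  have d: "((\<lambda>r. A*(r-t0) + c*(r-t0)^2/2) has_vector_derivative (A + c*(r-t0))) (at r within X)" for r X
  proof -
    have "((\<lambda>r. A*(r-t0) + c*(r-t0)^2/2) has_real_derivative (A*1 + c*(2*(r-t0)^1*1)/2)) (at r within X)"
      by (rule derivative_eq_intros refl | simp)+
    moreover have "A*1 + c*(2*(r-t0)^1*1)/2 = A + c*(r-t0)" by simp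
    ultimately show ?thesis by (simp only: has_real_derivative_iff_has_vector_derivative)
  qed
  have "((\<lambda>r. A + c*(r - t0)) has_integral ((\<lambda>r. A*(r-t0) + c*(r-t0)^2/2) t - (\<lambda>r. A*(r-t0) + c*(r-t0)^2/2) t0)) {t0..t}"
    by (rule fundamental_theorem_of_calculus[OF assms]) (rule d)
  then show ?thesis by simp
qed

lemma xi2_bounds:
  assumes "u \<in> admissible_controls" "s \<ge> 0"
  shows "snd x - s \<le> xi2 x u s \<and> xi2 x u s \<le> snd x + s"
proof -
  have b: "\<forall>t\<ge>0. u t \<in> {-1..1}" using assms unfolding admissible_controls_def by auto
  have i: "u integrable_on {0..s}" by (rule adm_integrable[OF assms])
  have "integral {0..s} (\<lambda>_. -1::real) \<le> integral {0..s} u"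
    by (rule integral_le) (use b i in auto)
  moreover have "integral {0..s} u \<le> integral {0..s} (\<lambda>_. 1::real)"
    by (rule integral_le) (use b i in auto)
  ultimately show ?thesis using assms(2) unfolding xi2_def by simp
qed

lemma xi1_lower:
  assumes "u \<in> admissible_controls" "t \<ge> 0"
  shows "fst x + snd x * t - t^2/2 \<le> xi1 x u t"
proof -
  have pi: "(\<lambda>r. snd x + (-1)*(r - 0)) integrable_on {0..t}"
    using poly_has_int[OF assms(2)] by blast
  have "integral {0..t} (\<lambda>r. snd x + (-1)*(r - 0)) \<le> integral {0..t} (xi2 x u)"
    by (rule integral_le[OF pi xi2_int[OF assms]]) (use xi2_bounds[OF assms(1)] in auto)
  also have "integral {0..t} (\<lambda>r. snd x + (-1)*(r - 0)) = snd x * t - t^2/2"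
    using poly_has_int[OF assms(2), of "snd x" "-1"] by (simp add: integral_unique)
  finally show ?thesis unfolding xi1_def by simp
qed

lemma xi1_diff:
  assumes "u \<in> admissible_controls" "t \<ge> 0"
  shows "xi1 x u t - xi1 y u t = (fst x - fst y) + (snd x - snd y) * t"
proof -
  have e: "xi2 x u s = xi2 y u s + (snd x - snd y)" for s unfolding xi2_def by simp
  have "integral {0..t} (xi2 x u) = integral {0..t} (\<lambda>s. xi2 y u s + (snd x - snd y))"
    by (rule integral_cong) (simp add: e)
  also have "\<dots> = integral {0..t} (xi2 y u) + integral {0..t} (\<lambda>s. (snd x - snd y))"
    by (rule integral_add) (auto intro: xi2_int[OF assms])
  finally show ?thesis using assms(2) unfolding xi1_def by simp
qed

lemma segment:
  assumes "u \<in> admissible_controls" "0 \<le> t0" "t0 \<le> t" "\<forall>r\<in>{t0<..<t}. u r = c"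
  shows "xi2 x u t = xi2 x u t0 + c*(t-t0) \<and>
         xi1 x u t = xi1 x u t0 + xi2 x u t0 * (t-t0) + c*(t-t0)^2/2"
proof -
  have seg2: "xi2 x u r = xi2 x u t0 + c*(r-t0)" if r: "t0 \<le> r" "r \<le> t" for r
  proof -
    have "integral {0..t0} u + integral {t0..r} u = integral {0..r} u"
      by (rule Henstock_Kurzweil_Integration.integral_combine) (use assms r in \<open>auto intro: adm_integrable\<close>)
    moreover have "integral {t0..r} u = integral {t0..r} (\<lambda>_. c)"
      by (rule integral_spike[where S="{t0,r}"]) (use assms r in auto)
    moreover have "integral {t0..r} (\<lambda>_. c) = c*(r-t0)" using r by (simp add: mult.commute)
    ultimately show ?thesis unfolding xi2_def by linarith
  qed
  have C: "integral {0..t0} (xi2 x u) + integral {t0..t} (xi2 x u) = integral {0..t} (xi2 x u)"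
    by (rule Henstock_Kurzweil_Integration.integral_combine) (use assms in \<open>auto intro: xi2_int\<close>)
  have D: "integral {t0..t} (xi2 x u) = integral {t0..t} (\<lambda>r. xi2 x u t0 + c*(r-t0))"
    by (rule integral_cong) (rule seg2; auto)
  have E: "integral {t0..t} (\<lambda>r. xi2 x u t0 + c*(r-t0)) = xi2 x u t0 * (t-t0) + c*(t-t0)^2/2"
    by (rule integral_unique[OF poly_has_int[OF assms(3)]])
  have F: "xi1 x u t = fst x + integral {0..t0} (xi2 x u) + (xi2 x u t0 * (t-t0) + c*(t-t0)^2/2)"
    unfolding xi1_def using C D E by linarith
  show ?thesis using seg2[of t] assms F unfolding xi1_def[of x u t0] by linarith
qed



definition stepf :: "real \<Rightarrow> real \<Rightarrow> real \<Rightarrow> real \<Rightarrow> real \<Rightarrow> real \<Rightarrow> real" where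
  "stepf p q c1 c2 c3 = (\<lambda>t. if t \<le> p then c1 else if t \<le> q then c2 else c3)"

lemma ev_open: "open S \<Longrightarrow> x \<in> S \<Longrightarrow> eventually (\<lambda>y. y \<in> S) (nhds x)"
  by (rule eventually_nhds_in_open)

lemma stepf_adm:
  assumes "p \<le> q" "c1 \<in> {-1..1}" "c2 \<in> {-1..1}" "c3 \<in> {-1..1}"
  shows "stepf p q c1 c2 c3 \<in> admissible_controls"
proof -
  let ?u = "stepf p q c1 c2 c3"
  have cont: "isCont ?u x" if nx: "x \<notin> {p,q}" for x
  proof -
    consider "x < p" | "p < x" "x < q" | "q < x" using nx assms(1) by force
    then show ?thesis
    proof cases
      case 1
      have "eventually (\<lambda>y. ?u y = c1) (nhds x)"
        by (rule eventually_mono[OF ev_open[of "{..<p}" x]]) (use 1 in \<open>auto simp: stepf_def\<close>)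
      then show ?thesis by (simp only: isCont_cong) (rule continuous_const)
    next
      case 2
      have "eventually (\<lambda>y. ?u y = c2) (nhds x)"
        by (rule eventually_mono[OF ev_open[of "{p<..<q}" x]]) (use 2 in \<open>auto simp: stepf_def\<close>)
      then show ?thesis by (simp only: isCont_cong) (rule continuous_const)
    next
      case 3
      have "eventually (\<lambda>y. ?u y = c3) (nhds x)"
        by (rule eventually_mono[OF ev_open[of "{q<..}" x]]) (use 3 assms(1) in \<open>auto simp: stepf_def\<close>)
      then show ?thesis by (simp only: isCont_cong) (rule continuous_const)
    qed
  qed
  have left: "\<exists>l. (?u \<longlongrightarrow> l) (at s within {0..<s})" if "s \<in> {p,q}" for s
  proof (cases "s = p \<or> p = q")
    case True
    have "eventually (\<lambda>y. ?u y = c1) (at s within {0..<s})"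
      unfolding eventually_at_filter using True that
      by (auto simp: stepf_def intro!: always_eventually)
    then show ?thesis by (blast intro: tendsto_eventually)
  next
    case False
    then have "s = q" "p < q" using that assms(1) by auto
    have "eventually (\<lambda>y. ?u y = c2) (at s within {0..<s})"
      unfolding eventually_at_filter
      by (rule eventually_mono[OF ev_open[of "{p<..}" s]]) (use \<open>s = q\<close> \<open>p < q\<close> in \<open>auto simp: stepf_def\<close>)
    then show ?thesis by (blast intro: tendsto_eventually)
  qed
  have right: "\<exists>l. (?u \<longlongrightarrow> l) (at s within {s<..})" if "s \<in> {p,q}" for s
  proof (cases "s = q \<or> p = q")
    case True
    have "eventually (\<lambda>y. ?u y = c3) (at s within {s<..})"
      unfolding eventually_at_filter using True that assms(1)
      by (auto simp: stepf_def intro!: always_eventually)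
    then show ?thesis by (blast intro: tendsto_eventually)
  next
    case False
    then have "s = p" "p < q" using that assms(1) by auto
    have "eventually (\<lambda>y. ?u y = c2) (at s within {s<..})"
      unfolding eventually_at_filter
      by (rule eventually_mono[OF ev_open[of "{..<q}" s]]) (use \<open>s = p\<close> \<open>p < q\<close> in \<open>auto simp: stepf_def\<close>)
    then show ?thesis by (blast intro: tendsto_eventually)
  qed
  have "piecewise_continuous ?u"
    unfolding piecewise_continuous_def
  proof (intro allI impI exI[of _ "{p,q}"] conjI ballI)
    fix T :: real
    show "finite {p,q}" by simp
    show "continuous_on ({0..T} - {p, q}) ?u"
      by (rule continuous_at_imp_continuous_on) (use cont in auto)
  next
    fix T s assume "s \<in> {p,q}"
    then show "\<exists>l. (?u \<longlongrightarrow> l) (at s within {0..<s})" by (rule left)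
  next
    fix T s assume "s \<in> {p,q}"
    then show "\<exists>r. (?u \<longlongrightarrow> r) (at s within {s<..})" by (rule right)
  qed
  moreover have "\<forall>t\<ge>0. ?u t \<in> {-1..1}" using assms by (auto simp: stepf_def)
  ultimately show ?thesis unfolding admissible_controls_def by auto
qed

lemma neg_adm:
  assumes "u \<in> admissible_controls"
  shows "(\<lambda>t. - u t) \<in> admissible_controls"
proof -
  have pc: "piecewise_continuous u" using assms unfolding admissible_controls_def by auto
  have "piecewise_continuous (\<lambda>t. - u t)"
    unfolding piecewise_continuous_def
  proof (intro allI impI)
    fix T :: real assume "T \<ge> 0"
    then obtain S where S: "finite S" "continuous_on ({0..T} - S) u"
      "\<forall>s\<in>S. (\<exists>l. (u \<longlongrightarrow> l) (at s within {0..<s})) \<and> (\<exists>r. (u \<longlongrightarrow> r) (at s within {s<..}))"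
      using pc unfolding piecewise_continuous_def by blast
    show "\<exists>S. finite S \<and> continuous_on ({0..T} - S) (\<lambda>t. - u t) \<and>
        (\<forall>s\<in>S. (\<exists>l. ((\<lambda>t. - u t) \<longlongrightarrow> l) (at s within {0..<s})) \<and>
                (\<exists>r. ((\<lambda>t. - u t) \<longlongrightarrow> r) (at s within {s<..})))"
      using S by (intro exI[of _ S]) (blast intro: continuous_on_minus tendsto_minus)
  qed
  then show ?thesis using assms unfolding admissible_controls_def by auto
qed

lemma xi2_neg: "xi2 (-a, -b) (\<lambda>t. - u t) t = - xi2 (a,b) u t"
  unfolding xi2_def by simp

lemma xi_neg: "xi (-a, -b) (\<lambda>t. - u t) t = (- xi1 (a,b) u t, - xi2 (a,b) u t)"
proof -
  have "xi1 (-a, -b) (\<lambda>t. - u t) t = - xi1 (a,b) u t"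
    unfolding xi1_def xi2_neg by simp
  then show ?thesis unfolding xi_def xi2_neg by simp
qed



lemma xi_0: "xi1 x u 0 = fst x" "xi2 x u 0 = snd x"
  unfolding xi1_def xi2_def by simp_all

lemma rec_pos:
  assumes "0 \<le> b" "b \<le> 1" "-1 \<le> a" "a \<le> 1"
  shows "\<exists>u\<in>admissible_controls. \<forall>t\<ge>0. \<exists>t'\<in>{t..t+2}. xi (a,b) u t' \<in> Q_box"
proof (cases "a < 0")
  case True
  define u where "u = stepf b b (-1) 0 0"
  have adm: "u \<in> admissible_controls" unfolding u_def by (rule stepf_adm) auto
  have ph1: "xi (a,b) u t \<in> Q_box" if "0 \<le> t" "t \<le> b" for t
  proof -
    have "\<forall>r\<in>{0<..<t}. u r = -1" using that by (auto simp: u_def stepf_def)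
    from segment[OF adm order.refl that(1) this, of "(a,b)"]
    have e: "xi2 (a,b) u t = b - t" "xi1 (a,b) u t = a + b*t - t^2/2"
      by (simp_all add: xi_0 algebra_simps)
    have "t*t \<le> b*t" using that by (intro mult_right_mono) auto
    moreover have "b*t \<le> 1" using that assms by (intro mult_le_one) auto
    moreover have "0 \<le> b*t" "0 \<le> t*t" using that assms by auto
    ultimately have "-1 \<le> a + b*t - t^2/2 \<and> a + b*t - t^2/2 \<le> 1 \<and> -1 \<le> b - t \<and> b - t \<le> 1"
      using that assms True unfolding power2_eq_square by (intro conjI; linarith)
    then show ?thesis using e by (simp add: Q_box_def xi_def)
  qed
  have "xi (a,b) u t \<in> Q_box" if "0 \<le> t" for t
  proof (cases "t \<le> b")
    case True then show ?thesis using ph1 that by auto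
  next
    case False
    have "\<forall>r\<in>{b<..<t}. u r = 0" by (auto simp: u_def stepf_def)
    from segment[OF adm assms(1) _ this, of "(a,b)"] False
    have "xi2 (a,b) u t = xi2 (a,b) u b" "xi1 (a,b) u t = xi1 (a,b) u b + xi2 (a,b) u b * (t - b)"
      by auto
    moreover have "xi2 (a,b) u b = 0"
    proof -
      have "\<forall>r\<in>{0<..<b}. u r = -1" by (auto simp: u_def stepf_def)
      from segment[OF adm order.refl assms(1) this, of "(a,b)"] show ?thesis by (simp add: xi_0)
    qed
    ultimately have "xi (a,b) u t = xi (a,b) u b" by (simp add: xi_def)
    then show ?thesis using ph1[of b] assms by simp
  qed
  then show ?thesis using adm by (intro bexI[of _ u]) (auto intro: bexI[of _ "_::real"])
next
  case False
  define u where "u = stepf (2*b) (3*b) (-1) 1 0"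
  have adm: "u \<in> admissible_controls" unfolding u_def by (rule stepf_adm) (use assms in auto)
  have ph1: "xi2 (a,b) u t = b - t \<and> xi1 (a,b) u t = a + b*t - t^2/2" if "0 \<le> t" "t \<le> 2*b" for t
  proof -
    have "\<forall>r\<in>{0<..<t}. u r = -1" using that by (auto simp: u_def stepf_def)
    from segment[OF adm order.refl that(1) this, of "(a,b)"]
    show ?thesis by (simp add: xi_0 algebra_simps)
  qed
  have x2b: "xi2 (a,b) u (2*b) = -b" "xi1 (a,b) u (2*b) = a"
    using ph1[of "2*b"] assms by (auto simp: power2_eq_square algebra_simps)
  have ph2: "xi2 (a,b) u t = -b + (t - 2*b) \<and> xi1 (a,b) u t = a - b*(t-2*b) + (t-2*b)^2/2"
    if "2*b \<le> t" "t \<le> 3*b" for t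
  proof -
    have "\<forall>r\<in>{2*b<..<t}. u r = 1" using that by (auto simp: u_def stepf_def)
    from segment[OF adm _ that(1) this, of "(a,b)"] assms
    have S: "xi2 (a,b) u t = xi2 (a,b) u (2*b) + 1 * (t - 2*b) \<and>
      xi1 (a,b) u t = xi1 (a,b) u (2*b) + xi2 (a,b) u (2*b) * (t - 2*b) + 1 * (t - 2*b)^2/2" by simp
    show ?thesis using S unfolding x2b by (simp add: algebra_simps)
  qed
  have inQ2: "xi (a,b) u t \<in> Q_box" if "2*b \<le> t" "t \<le> 3*b" for t
  proof -
    define w where "w = t - 2*b"
    have w: "0 \<le> w" "w \<le> b" using that by (auto simp: w_def)
    have e: "xi2 (a,b) u t = w - b" "xi1 (a,b) u t = a - b*w + w^2/2"
      using ph2[OF that] by (auto simp: w_def)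
    have "w*w \<le> b*w" using w by (intro mult_right_mono) auto
    moreover have "b*w \<le> 1" using w assms by (intro mult_le_one) auto
    moreover have "0 \<le> b*w" "0 \<le> w*w" using w assms by auto
    ultimately have "-1 \<le> a - b*w + w^2/2 \<and> a - b*w + w^2/2 \<le> 1 \<and> -1 \<le> w - b \<and> w - b \<le> 1"
      using w assms False unfolding power2_eq_square by (intro conjI; linarith)
    then show ?thesis using e by (simp add: Q_box_def xi_def)
  qed
  have x3b: "xi2 (a,b) u (3*b) = 0" using ph2[of "3*b"] assms by auto
  have inQ3: "xi (a,b) u t \<in> Q_box" if "3*b \<le> t" for t
  proof -
    have "\<forall>r\<in>{3*b<..<t}. u r = 0" using assms by (auto simp: u_def stepf_def)
    from segment[OF adm _ that this, of "(a,b)"] assms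
    have "xi (a,b) u t = xi (a,b) u (3*b)" by (simp add: x3b xi_def)
    then show ?thesis using inQ2[of "3*b"] assms by simp
  qed
  have "\<exists>t'\<in>{t..t+2}. xi (a,b) u t' \<in> Q_box" if "0 \<le> t" for t
  proof (cases "t \<le> 2*b")
    case True
    then show ?thesis using inQ2[of "2*b"] assms that by (intro bexI[of _ "2*b"]) auto
  next
    case False
    then have "xi (a,b) u t \<in> Q_box" using inQ2[of t] inQ3[of t] by (cases "t \<le> 3*b") auto
    then show ?thesis by (intro bexI[of _ t]) auto
  qed
  then show ?thesis using adm by blast
qed

lemma rec2: "controlled_recurrent 2 Q_box"
  unfolding controlled_recurrent_def
proof
  fix x assume x: "x \<in> Q_box"
  obtain a b where ab: "x = (a,b)" by (cases x)
  have r: "-1 \<le> a" "a \<le> 1" "-1 \<le> b" "b \<le> 1" using x ab by (auto simp: Q_box_def)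
  show "\<exists>u\<in>admissible_controls. \<forall>t\<ge>0. \<exists>t'\<in>{t..t + 2}. xi x u t' \<in> Q_box"
  proof (cases "0 \<le> b")
    case True then show ?thesis using rec_pos[of b a] r ab by auto
  next
    case False
    obtain u where u: "u \<in> admissible_controls" "\<forall>t\<ge>0. \<exists>t'\<in>{t..t+2}. xi (-a,-b) u t' \<in> Q_box"
      using rec_pos[of "-b" "-a"] r False by auto
    have "\<forall>t\<ge>0. \<exists>t'\<in>{t..t+2}. xi (a,b) (\<lambda>t. - u t) t' \<in> Q_box"
    proof (intro allI impI)
      fix t :: real assume "0 \<le> t"
      then obtain t' where t': "t' \<in> {t..t+2}" "xi (-a,-b) u t' \<in> Q_box" using u(2) by blast
      have "xi (a,b) (\<lambda>t. - u t) t' = (- xi1 (-a,-b) u t', - xi2 (-a,-b) u t')"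
        using xi_neg[of "-a" "-b" u t'] by simp
      then have "xi (a,b) (\<lambda>t. - u t) t' \<in> Q_box" using t'(2) by (auto simp: Q_box_def xi_def)
      then show "\<exists>t'\<in>{t..t+2}. xi (a,b) (\<lambda>t. - u t) t' \<in> Q_box" using t'(1) by blast
    qed
    then show ?thesis using neg_adm[OF u(1)] ab by blast
  qed
qed



lemma p11_lower:
  assumes "u \<in> admissible_controls" "t \<ge> 0"
  shows "1 + t - t^2/2 \<le> xi1 (1,1) u t"
  using xi1_lower[OF assms, of "(1,1)"] by simp

lemma nbhd_fst: "y \<in> nbhd \<epsilon> Q_box \<Longrightarrow> fst y \<le> 1 + \<epsilon>"
  unfolding nbhd_def Q_box_def by auto

lemma Q_fst: "y \<in> Q_box \<Longrightarrow> fst y \<le> 1"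
  unfolding Q_box_def by auto

lemma p11Q: "(1,1) \<in> Q_box" unfolding Q_box_def by auto

lemma not_inv: "\<not> controlled_invariant Q_box"
proof
  assume "controlled_invariant Q_box"
  then obtain u where u: "u \<in> admissible_controls" "\<forall>t\<ge>0. xi (1,1) u t \<in> Q_box"
    using p11Q unfolding controlled_invariant_def by blast
  have "xi1 (1,1) u 1 \<le> 1" using Q_fst[OF u(2)[rule_format, of 1]] by (simp add: xi_def)
  moreover have "1 + 1 - 1^2/2 \<le> xi1 (1,1) u 1" by (rule p11_lower[OF u(1)]) simp
  ultimately show False by simp
qed

lemma window_bound:
  fixes m t' :: real
  assumes "m \<le> t'" "t' \<le> 2 - m"
  shows "m*(2-m)/2 \<le> t' - t'^2/2"
proof -
  have "0 \<le> (t' - m)*(2 - m - t')" using assms by (intro mult_nonneg_nonneg) auto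
  then have "t' * t' + m * 2 \<le> m * m + t' * 2" by (simp add: algebra_simps)
  then show ?thesis by (simp add: power2_eq_square field_simps)
qed

lemma not_rec: assumes "\<tau> < 2" shows "\<not> controlled_recurrent \<tau> Q_box"
proof
  assume "controlled_recurrent \<tau> Q_box"
  then obtain u where u: "u \<in> admissible_controls" "\<forall>t\<ge>0. \<exists>t'\<in>{t..t+\<tau>}. xi (1,1) u t' \<in> Q_box"
    using p11Q unfolding controlled_recurrent_def by blast
  define m where "m = (2 - \<tau>)/2"
  obtain t' where t': "t' \<in> {m..m+\<tau>}" "xi (1,1) u t' \<in> Q_box"
    using u(2) assms m_def by (metis divide_nonneg_pos diff_ge_0_iff_ge less_le zero_less_numeral)
  have mt: "m + \<tau> = 2 - m" "0 < m" using assms by (auto simp: m_def field_simps)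
  have tm: "0 < m" "m \<le> t'" "t' \<le> 2 - m" using t' mt by auto
  have "xi1 (1,1) u t' \<le> 1" using Q_fst[OF t'(2)] by (simp add: xi_def)
  moreover have "1 + t' - t'^2/2 \<le> xi1 (1,1) u t'" by (rule p11_lower[OF u(1)]) (use tm in auto)
  moreover have "m*(2-m)/2 \<le> t' - t'^2/2" by (rule window_bound) (use tm in auto)
  moreover have "0 < m*(2-m)" using tm by (intro mult_pos_pos) auto
  ultimately show False by linarith
qed

lemma r_inv_inf:
  assumes "0 < \<epsilon>" "\<epsilon> < 1/2" "1 \<le> T"
  shows "r_inv T \<epsilon> Q_box = \<infinity>"
proof -
  have E: "{S. S \<subseteq> admissible_controls \<and> (\<forall>x\<in>Q_box. \<exists>u\<in>S. inv_traj T \<epsilon> Q_box x u)} = {}"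
  proof (rule ccontr)
    assume "\<not> ?thesis"
    then obtain S where S: "S \<subseteq> admissible_controls" "\<forall>x\<in>Q_box. \<exists>u\<in>S. inv_traj T \<epsilon> Q_box x u" by blast
    then obtain u where u: "u \<in> admissible_controls" "inv_traj T \<epsilon> Q_box (1,1) u" using p11Q by blast
    have "xi (1,1) u 1 \<in> nbhd \<epsilon> Q_box" using u(2) assms unfolding inv_traj_def by auto
    then have "xi1 (1,1) u 1 \<le> 1 + \<epsilon>" using nbhd_fst by (fastforce simp: xi_def)
    moreover have "1 + 1 - 1^2/2 \<le> xi1 (1,1) u 1" by (rule p11_lower[OF u(1)]) simp
    ultimately show False using assms by simp
  qed
  show ?thesis unfolding r_inv_def E by (simp add: top_enat_def)
qed

definition eps0 :: "real \<Rightarrow> real" where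
  "eps0 \<tau> = (if \<tau> < 0 then 1 else ((2-\<tau>)/2)*(2 - (2-\<tau>)/2)/2)"

lemma eps0_pos: "\<tau> < 2 \<Longrightarrow> 0 < eps0 \<tau>"
  unfolding eps0_def by (auto intro!: mult_pos_pos divide_pos_pos)

lemma r_rec_inf:
  assumes "\<tau> < 2" "0 < \<epsilon>" "\<epsilon> < eps0 \<tau>" "2 \<le> T"
  shows "r_rec T \<epsilon> \<tau> Q_box = \<infinity>"
proof -
  define m where "m = (2 - \<tau>)/2"
  have E: "{S. S \<subseteq> admissible_controls \<and> (\<forall>x\<in>Q_box. \<exists>u\<in>S. rec_traj T \<epsilon> \<tau> Q_box x u)} = {}"
  proof (rule ccontr)
    assume "\<not> ?thesis"
    then obtain S where S: "S \<subseteq> admissible_controls" "\<forall>x\<in>Q_box. \<exists>u\<in>S. rec_traj T \<epsilon> \<tau> Q_box x u" by blast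
    then obtain u where u: "u \<in> admissible_controls" "rec_traj T \<epsilon> \<tau> Q_box (1,1) u" using p11Q by blast
    have "m \<in> {0..T-\<tau>}" using assms by (auto simp: m_def)
    then obtain t' where t': "t' \<in> {m..m+\<tau>}" "xi (1,1) u t' \<in> nbhd \<epsilon> Q_box"
      using u(2) unfolding rec_traj_def by blast
    have mt: "m + \<tau> = 2 - m" "0 < m" using assms by (auto simp: m_def field_simps)
    have tm: "0 < m" "m \<le> t'" "t' \<le> 2 - m" "0 \<le> \<tau>" using t' mt by auto
    have "xi1 (1,1) u t' \<le> 1 + \<epsilon>" using nbhd_fst[OF t'(2)] by (simp add: xi_def)
    moreover have "1 + t' - t'^2/2 \<le> xi1 (1,1) u t'" by (rule p11_lower[OF u(1)]) (use tm in auto)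
    moreover have "m*(2-m)/2 \<le> t' - t'^2/2" by (rule window_bound) (use tm in auto)
    moreover have "eps0 \<tau> = m*(2-m)/2" using tm by (simp add: eps0_def m_def)
    ultimately show False using assms by linarith
  qed
  show ?thesis unfolding r_rec_def E by (simp add: top_enat_def)
qed

lemma Limsup_inf:
  assumes "\<forall>T\<ge>T0. g T = \<infinity>"
  shows "Limsup at_top (\<lambda>T::real. ereal (1/T) * elog2 (g T)) = \<infinity>"
proof (rule lim_imp_Limsup)
  show "\<not> trivial_limit (at_top :: real filter)" by simp
  have "eventually (\<lambda>T. ereal (1/T) * elog2 (g T) = \<infinity>) at_top"
    using eventually_ge_at_top[of "max T0 1"]
    by (rule eventually_mono) (use assms in \<open>auto simp: elog2_def\<close>)
  then show "((\<lambda>T::real. ereal (1/T) * elog2 (g T)) \<longlongrightarrow> \<infinity>) at_top"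
    by (rule tendsto_eventually)
qed

lemma Lim_inf:
  assumes "0 < e0" "\<forall>\<epsilon>. 0 < \<epsilon> \<and> \<epsilon> < e0 \<longrightarrow> f \<epsilon> = (\<infinity>::ereal)"
  shows "Lim (at_right (0::real)) f = \<infinity>"
proof (rule tendsto_Lim)
  show "\<not> trivial_limit (at_right (0::real))" by simp
  have "eventually (\<lambda>\<epsilon>. f \<epsilon> = \<infinity>) (at_right (0::real))"
    using eventually_at_right_real[OF assms(1)]
    by (rule eventually_mono) (use assms(2) in auto)
  then show "(f \<longlongrightarrow> \<infinity>) (at_right 0)" by (rule tendsto_eventually)
qed

lemma h_inv_inf: "h_inv Q_box = \<infinity>"
  unfolding h_inv_def
proof (rule Lim_inf[of "1/2"])
  show "\<forall>\<epsilon>. 0 < \<epsilon> \<and> \<epsilon> < 1/2 \<longrightarrow> Limsup at_top (\<lambda>T. ereal (1 / T) * elog2 (r_inv T \<epsilon> Q_box)) = \<infinity>"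
    using r_inv_inf by (auto intro!: Limsup_inf[of 1])
qed simp

lemma h_rec_inf: "\<tau> < 2 \<Longrightarrow> h_rec \<tau> Q_box = \<infinity>"
  unfolding h_rec_def
proof (rule Lim_inf[of "eps0 \<tau>"])
  assume "\<tau> < 2"
  then show "\<forall>\<epsilon>. 0 < \<epsilon> \<and> \<epsilon> < eps0 \<tau> \<longrightarrow> Limsup at_top (\<lambda>T. ereal (1 / T) * elog2 (r_rec T \<epsilon> \<tau> Q_box)) = \<infinity>"
    using r_rec_inf by (auto intro!: Limsup_inf[of 2])
qed (rule eps0_pos)



definition ctrl :: "real \<times> real \<Rightarrow> (real \<Rightarrow> real)" where
  "ctrl c = (SOME u. u \<in> admissible_controls \<and> (\<forall>t\<ge>0. \<exists>t'\<in>{t..t+2}. xi c u t' \<in> Q_box))"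

lemma ctrl_ok:
  assumes "c \<in> Q_box"
  shows "ctrl c \<in> admissible_controls \<and> (\<forall>t\<ge>0. \<exists>t'\<in>{t..t+2}. xi c (ctrl c) t' \<in> Q_box)"
proof -
  have "\<exists>u. u \<in> admissible_controls \<and> (\<forall>t\<ge>0. \<exists>t'\<in>{t..t+2}. xi c u t' \<in> Q_box)"
    using rec2 assms unfolding controlled_recurrent_def by blast
  then show ?thesis unfolding ctrl_def by (rule someI_ex)
qed

lemma grid_point:
  fixes a \<delta> :: real
  assumes "-1 \<le> a" "a \<le> 1" "0 < \<delta>"
  shows "nat \<lfloor>(a+1)/\<delta>\<rfloor> \<le> nat \<lceil>2/\<delta>\<rceil>"
    and "-1 \<le> -1 + real (nat \<lfloor>(a+1)/\<delta>\<rfloor>) * \<delta>"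
    and "-1 + real (nat \<lfloor>(a+1)/\<delta>\<rfloor>) * \<delta> \<le> a"
    and "a - (-1 + real (nat \<lfloor>(a+1)/\<delta>\<rfloor>) * \<delta>) \<le> \<delta>"
proof -
  have nn: "0 \<le> (a+1)/\<delta>" using assms by auto
  then have ri: "real (nat \<lfloor>(a+1)/\<delta>\<rfloor>) = of_int \<lfloor>(a+1)/\<delta>\<rfloor>" by simp
  have f1: "of_int \<lfloor>(a+1)/\<delta>\<rfloor> \<le> (a+1)/\<delta>" by (rule of_int_floor_le)
  have f2: "(a+1)/\<delta> < of_int \<lfloor>(a+1)/\<delta>\<rfloor> + 1" by (rule real_of_int_floor_add_one_gt)
  have "(a+1)/\<delta> \<le> 2/\<delta>" using assms by (intro divide_right_mono) auto
  then have "\<lfloor>(a+1)/\<delta>\<rfloor> \<le> \<lceil>2/\<delta>\<rceil>"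
    by (meson f1 le_ceiling_iff order_trans floor_le_ceiling dual_order.trans ceiling_mono)
  then show "nat \<lfloor>(a+1)/\<delta>\<rfloor> \<le> nat \<lceil>2/\<delta>\<rceil>" by (rule nat_mono)
  have "of_int \<lfloor>(a+1)/\<delta>\<rfloor> * \<delta> \<le> (a+1)/\<delta> * \<delta>" by (rule mult_right_mono[OF f1]) (use assms in auto)
  then have "of_int \<lfloor>(a+1)/\<delta>\<rfloor> * \<delta> \<le> a + 1" using assms by simp
  moreover have "a + 1 < (of_int \<lfloor>(a+1)/\<delta>\<rfloor> + 1) * \<delta>" using f2 assms by (simp add: field_simps)
  moreover have "(0::real) \<le> of_int \<lfloor>(a+1)/\<delta>\<rfloor>" using nn by simp
  ultimately show "-1 \<le> -1 + real (nat \<lfloor>(a+1)/\<delta>\<rfloor>) * \<delta>"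
    "-1 + real (nat \<lfloor>(a+1)/\<delta>\<rfloor>) * \<delta> \<le> a"
    "a - (-1 + real (nat \<lfloor>(a+1)/\<delta>\<rfloor>) * \<delta>) \<le> \<delta>"
    unfolding ri using assms by (auto simp: algebra_simps)
qed

lemma r_rec_le:
  assumes "0 < \<epsilon>" "2 \<le> \<tau>" "0 \<le> T"
  shows "r_rec T \<epsilon> \<tau> Q_box \<le> enat ((nat \<lceil>2/(\<epsilon>/(T+1))\<rceil> + 1)^2)"
proof -
  define \<delta> where "\<delta> = \<epsilon>/(T+1)"
  define N where "N = nat \<lceil>2/\<delta>\<rceil>"
  have dpos: "0 < \<delta>" using assms by (simp add: \<delta>_def)
  have "\<delta> * (T+1) = \<epsilon>" using assms unfolding \<delta>_def by simp
  then have dT: "\<delta> + \<delta> * T = \<epsilon>" by (simp add: algebra_simps)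
  define gp where "gp = (\<lambda>(i::nat,j::nat). (-1 + real i * \<delta>, -1 + real j * \<delta>))"
  define G where "G = gp ` ({0..N} \<times> {0..N})"
  define S0 where "S0 = ctrl ` (G \<inter> Q_box)"
  have finG: "finite G" unfolding G_def by simp
  have cardG: "card G \<le> (N+1)^2"
  proof -
    have "card G \<le> card ({0..N} \<times> {0..N})" unfolding G_def by (rule card_image_le) simp
    also have "\<dots> = (N+1)^2" by (simp add: card_cartesian_product power2_eq_square)
    finally show ?thesis .
  qed
  have finS0: "finite S0" unfolding S0_def using finG by simp
  have cardS0: "card S0 \<le> (N+1)^2"
  proof -
    have "card S0 \<le> card (G \<inter> Q_box)" unfolding S0_def by (rule card_image_le) (use finG in simp)
    also have "\<dots> \<le> card G" by (rule card_mono[OF finG]) auto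
    finally show ?thesis using cardG by simp
  qed
  have sub: "S0 \<subseteq> admissible_controls" unfolding S0_def using ctrl_ok by auto
  have cover: "\<exists>u\<in>S0. rec_traj T \<epsilon> \<tau> Q_box x u" if x: "x \<in> Q_box" for x
  proof -
    obtain a b where ab: "x = (a,b)" by (cases x)
    have r: "-1 \<le> a" "a \<le> 1" "-1 \<le> b" "b \<le> 1" using x ab by (auto simp: Q_box_def)
    define i where "i = nat \<lfloor>(a+1)/\<delta>\<rfloor>"
    define j where "j = nat \<lfloor>(b+1)/\<delta>\<rfloor>"
    note ga = grid_point[OF r(1,2) dpos, folded i_def N_def]
    note gb = grid_point[OF r(3,4) dpos, folded j_def N_def]
    define c where "c = gp (i,j)"
    have cG: "c \<in> G" unfolding c_def G_def using ga(1) gb(1) by auto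
    have cQ: "c \<in> Q_box" unfolding c_def gp_def Q_box_def using ga gb r by auto
    have u: "ctrl c \<in> admissible_controls" "\<forall>t\<ge>0. \<exists>t'\<in>{t..t+2}. xi c (ctrl c) t' \<in> Q_box"
      using ctrl_ok[OF cQ] by auto
    have d1: "0 \<le> a - fst c" "a - fst c \<le> \<delta>" using ga by (auto simp: c_def gp_def)
    have d2: "0 \<le> b - snd c" "b - snd c \<le> \<delta>" using gb by (auto simp: c_def gp_def)
    have "rec_traj T \<epsilon> \<tau> Q_box x (ctrl c)"
      unfolding rec_traj_def
    proof
      fix t assume t: "t \<in> {0..T-\<tau>}"
      then obtain t' where t': "t' \<in> {t..t+2}" "xi c (ctrl c) t' \<in> Q_box" using u(2) by auto
      have t'r: "0 \<le> t'" "t' \<le> T" "t' \<le> t + \<tau>" "t \<le> t'" using t t' assms by auto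
      have e1: "xi1 x (ctrl c) t' - xi1 c (ctrl c) t' = (a - fst c) + (b - snd c) * t'"
        using xi1_diff[OF u(1) t'r(1), of x c] ab by simp
      have e2: "xi2 x (ctrl c) t' - xi2 c (ctrl c) t' = b - snd c"
        unfolding xi2_def ab by simp
      have "(b - snd c) * t' \<le> \<delta> * T" using d2 t'r by (intro mult_mono) auto
      moreover have "0 \<le> (b - snd c) * t'" using d2 t'r by auto
      ultimately have "\<bar>xi1 x (ctrl c) t' - xi1 c (ctrl c) t'\<bar> \<le> \<epsilon>"
        using e1 d1 dT by linarith
      moreover have "\<bar>xi2 x (ctrl c) t' - xi2 c (ctrl c) t'\<bar> \<le> \<epsilon>"
        using e2 d2 dT dpos assms(3) by (smt (verit) mult_nonneg_nonneg)
      ultimately have "xi x (ctrl c) t' \<in> nbhd \<epsilon> Q_box"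
        unfolding nbhd_def using t'(2) by (intro CollectI bexI[of _ "xi c (ctrl c) t'"]) (auto simp: xi_def abs_minus_commute)
      then show "\<exists>t'\<in>{t..t+\<tau>}. xi x (ctrl c) t' \<in> nbhd \<epsilon> Q_box" using t'r by auto
    qed
    moreover have "ctrl c \<in> S0" unfolding S0_def using cG cQ by auto
    ultimately show ?thesis by blast
  qed
  have "r_rec T \<epsilon> \<tau> Q_box \<le> ecard S0"
    unfolding r_rec_def by (rule INF_lower) (use sub cover in auto)
  also have "\<dots> \<le> enat ((N+1)^2)" unfolding ecard_def using finS0 cardS0 by simp
  finally show ?thesis unfolding N_def \<delta>_def .
qed

lemma r_rec_ge1:
  "1 \<le> r_rec T \<epsilon> \<tau> Q_box"
  unfolding r_rec_def
proof (rule INF_greatest)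
  fix S assume "S \<in> {S. S \<subseteq> admissible_controls \<and> (\<forall>x\<in>Q_box. \<exists>u\<in>S. rec_traj T \<epsilon> \<tau> Q_box x u)}"
  then have "S \<noteq> {}" using p11Q by auto
  then show "1 \<le> ecard S" unfolding ecard_def
    by (auto simp: one_enat_def Suc_le_eq card_gt_0_iff)
qed



lemma N_bound:
  assumes "0 < \<epsilon>" "1 \<le> T"
  shows "real (nat \<lceil>2/(\<epsilon>/(T+1))\<rceil> + 1) \<le> (4/\<epsilon> + 2) * T"
proof -
  have e: "2/(\<epsilon>/(T+1)) = 2*(T+1)/\<epsilon>" using assms by simp
  have nn: "0 \<le> 2*(T+1)/\<epsilon>" using assms by simp
  have "real (nat \<lceil>2*(T+1)/\<epsilon>\<rceil>) = of_int \<lceil>2*(T+1)/\<epsilon>\<rceil>" using nn by simp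
  moreover have "of_int \<lceil>2*(T+1)/\<epsilon>\<rceil> \<le> 2*(T+1)/\<epsilon> + (1::real)" by (rule of_int_ceiling_le_add_one)
  moreover have "2*(T+1)/\<epsilon> \<le> (4*T)/\<epsilon>" using assms by (intro divide_right_mono) auto
  moreover have "(4/\<epsilon> + 2) * T = (4*T)/\<epsilon> + 2*T" by (simp add: algebra_simps)
  moreover have "real (nat \<lceil>2*(T+1)/\<epsilon>\<rceil> + 1) = real (nat \<lceil>2*(T+1)/\<epsilon>\<rceil>) + 1" by simp
  moreover have "2 \<le> 2*T" using assms by simp
  ultimately show ?thesis unfolding e by linarith
qed

definition Bd :: "real \<Rightarrow> real \<Rightarrow> real" where
  "Bd \<epsilon> T = 2 * log 2 (4/\<epsilon> + 2) * (1/T) + (2 / ln 2) * (ln T / T)"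

lemma Bd_tendsto: "((\<lambda>T. Bd \<epsilon> T) \<longlongrightarrow> 0) at_top"
proof -
  have "((\<lambda>T. 2 * log 2 (4/\<epsilon> + 2) * (1/T) + (2 / ln 2) * (ln T / T)) \<longlongrightarrow>
           2 * log 2 (4/\<epsilon> + 2) * 0 + (2 / ln 2) * 0) at_top"
    by (intro tendsto_intros ln_x_over_x_tendsto_0 tendsto_divide_0[OF tendsto_const] filterlim_ident filterlim_at_top_imp_at_infinity)
  then show ?thesis unfolding Bd_def by simp
qed

lemma term_bounds:
  assumes "0 < \<epsilon>" "2 \<le> \<tau>" "1 \<le> T"
  shows "0 \<le> ereal (1/T) * elog2 (r_rec T \<epsilon> \<tau> Q_box) \<and>
         ereal (1/T) * elog2 (r_rec T \<epsilon> \<tau> Q_box) \<le> ereal (Bd \<epsilon> T)"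
proof -
  define M where "M = (nat \<lceil>2/(\<epsilon>/(T+1))\<rceil> + 1)^2"
  define K where "K = 4/\<epsilon> + 2"
  have "0 < 4/\<epsilon>" using assms by simp
  then have Kpos: "0 < K" unfolding K_def by linarith
  have le: "r_rec T \<epsilon> \<tau> Q_box \<le> enat M" unfolding M_def by (rule r_rec_le) (use assms in auto)
  have ge: "1 \<le> r_rec T \<epsilon> \<tau> Q_box" by (rule r_rec_ge1)
  obtain k where k: "r_rec T \<epsilon> \<tau> Q_box = enat k" using le by (cases "r_rec T \<epsilon> \<tau> Q_box") auto
  have k1: "1 \<le> k" using ge k by (simp add: one_enat_def)
  have kM: "k \<le> M" using le k by simp
  have "real M = (real (nat \<lceil>2/(\<epsilon>/(T+1))\<rceil> + 1))^2" unfolding M_def by simp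
  also have "\<dots> \<le> (K * T)^2"
    by (rule power_mono) (use N_bound[OF assms(1,3)] in \<open>auto simp: K_def\<close>)
  finally have kK: "real k \<le> (K*T)^2" using kM by (meson of_nat_le_iff order_trans)
  have "log 2 (real k) \<le> log 2 ((K*T)^2)"
    using kK k1 by (subst log_le_cancel_iff) auto
  also have "\<dots> = 2 * (log 2 K + ln T / ln 2)"
  proof -
    have "ln ((K*T)^2) = 2 * (ln K + ln T)" using Kpos assms by (simp add: ln_realpow ln_mult)
    then show ?thesis unfolding log_def by (simp add: add_divide_distrib)
  qed
  finally have lk: "log 2 (real k) \<le> 2 * (log 2 K + ln T / ln 2)" .
  have l0: "0 \<le> log 2 (real k)" using k1 by simp
  have eq: "ereal (1/T) * elog2 (r_rec T \<epsilon> \<tau> Q_box) = ereal (log 2 (real k) / T)"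
    unfolding k elog2_def by simp
  have "log 2 (real k) / T \<le> 2 * (log 2 K + ln T / ln 2) / T"
    using lk assms by (intro divide_right_mono) auto
  also have "\<dots> = Bd \<epsilon> T"
  proof -
    have "T \<noteq> 0" "ln (2::real) \<noteq> 0" using assms by auto
    then show ?thesis unfolding Bd_def K_def by (simp add: field_simps)
  qed
  finally show ?thesis unfolding eq using l0 assms by simp
qed

lemma Limsup_zero:
  assumes "0 < \<epsilon>" "2 \<le> \<tau>"
  shows "Limsup at_top (\<lambda>T. ereal (1/T) * elog2 (r_rec T \<epsilon> \<tau> Q_box)) = 0"
proof (rule lim_imp_Limsup)
  show "\<not> trivial_limit (at_top :: real filter)" by simp
  have lo: "((\<lambda>T::real. 0::ereal) \<longlongrightarrow> 0) at_top" by simp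
  have hi: "((\<lambda>T. ereal (Bd \<epsilon> T)) \<longlongrightarrow> ereal 0) at_top"
    by (intro tendsto_intros Bd_tendsto)
  show "((\<lambda>T. ereal (1/T) * elog2 (r_rec T \<epsilon> \<tau> Q_box)) \<longlongrightarrow> 0) at_top"
  proof (rule tendsto_sandwich[OF _ _ lo])
    show "eventually (\<lambda>T. 0 \<le> ereal (1/T) * elog2 (r_rec T \<epsilon> \<tau> Q_box)) at_top"
      using eventually_ge_at_top[of 1] by (rule eventually_mono) (use term_bounds assms in blast)
    show "eventually (\<lambda>T. ereal (1/T) * elog2 (r_rec T \<epsilon> \<tau> Q_box) \<le> ereal (Bd \<epsilon> T)) at_top"
      using eventually_ge_at_top[of 1] by (rule eventually_mono) (use term_bounds assms in blast)
    show "((\<lambda>T. ereal (Bd \<epsilon> T)) \<longlongrightarrow> 0) at_top" using hi by (simp add: zero_ereal_def)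
  qed
qed

lemma h_rec_le:
  assumes "2 \<le> \<tau>"
  shows "h_rec \<tau> Q_box \<le> ereal (2 / ln 2)"
proof -
  have "h_rec \<tau> Q_box = 0"
    unfolding h_rec_def
  proof (rule tendsto_Lim)
    show "\<not> trivial_limit (at_right (0::real))" by simp
    have "eventually (\<lambda>\<epsilon>. Limsup at_top (\<lambda>T. ereal (1/T) * elog2 (r_rec T \<epsilon> \<tau> Q_box)) = 0) (at_right (0::real))"
      using eventually_at_right_real[of 0 1]
      by (rule eventually_mono) (use Limsup_zero assms in auto)
    then show "((\<lambda>\<epsilon>. Limsup at_top (\<lambda>T. ereal (1/T) * elog2 (r_rec T \<epsilon> \<tau> Q_box))) \<longlongrightarrow> 0) (at_right 0)"
      by (rule tendsto_eventually)
  qed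
  moreover have "(0::ereal) \<le> ereal (2 / ln 2)" by simp
  ultimately show ?thesis by simp
qed

theorem mainTheorem6:
  shows "\<not> controlled_invariant Q_box
    \<and> (\<forall>\<tau>::real. \<tau> < 2 \<longrightarrow> \<not> controlled_recurrent \<tau> Q_box)
    \<and> h_inv Q_box = \<infinity>
    \<and> (\<forall>\<tau>::real. \<tau> < 2 \<longrightarrow> h_rec \<tau> Q_box = \<infinity>)
    \<and> controlled_recurrent 2 Q_box
    \<and> (\<forall>\<tau>::real. \<tau> \<ge> 2 \<longrightarrow> h_rec \<tau> Q_box \<le> ereal (2 / ln 2))"
  using not_inv not_rec h_inv_inf h_rec_inf rec2 h_rec_le by blast


end
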